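(* For $m,l,r\in\mathbb{N}$ with $l\le m$ and $1\le r\le m$, \begin{align*} x^{-l}\Delta^{(-m-1)}(-t^2)y^{-r}&=q^{2l}[m+1]_q\,t^2W^-(q^mt^2)\star x^{-l}\Delta^{(-m)}(-q^{-1}t^2)y^{1-r}\\ &\quad+q^{l-1}[l]_q[m+1]_q\,t^2G(q^mt^2)\star x^{1-l}\Delta^{(-m)}(-q^{-1}t^2)y^{1-r},\\ y^{-l}\widetilde\Delta^{(-m-1)}(-t^2)x^{-r}&=q^{2l}[m+1]_q\,t^2W^+(q^mt^2)\star y^{-l}\widetilde\Delta^{(-m)}(-q^{-1}t^2)x^{1-r}\\ &\quad+q^{l-1}[l]_q[m+1]_q\,t^2\widetilde G(q^mt^2)\star y^{1-l}\widetilde\Delta^{(-m)}(-q^{-1}t^2)x^{1-r}. \end{align*}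
   Context: $\mathbb{F}$ is a field of characteristic zero, $q\in\mathbb{F}$ nonzero and not a root of unity. $[n]_q=\frac{q^n-q^{-n}}{q-q^{-1}}$. $\mathbb{V}$ is the free algebra on letters $x,y$ with basis the words ($\mathbf 1$ the empty word). The $q$-shuffle product $\star$ on $\mathbb{V}$ is the bilinear product with $\mathbf 1\star v=v\star\mathbf 1=v$ and, for nonempty words $u=u_1\cdots u_r$, $v=v_1\cdots v_s$, $u\star v=u_1((u_2\cdots u_r)\star v)+v_1(u\star(v_2\cdots v_s))q^{\langle v_1,u_1\rangle+\dots+\langle v_1,u_r\rangle}$ (juxtaposition = concatenation), where $\langle x,x\rangle=\langle y,y\rangle=2$, $\langle x,y\rangle=\langle y,x\rangle=-2$. It is extended to formal power series in the indeterminate $t$ coefficientwise (Cauchy product). Generating functions: $W^-(t)=\sum_{n\ge0}x(yx)^nt^n$, $W^+(t)=\sum_{n\ge0}y(xy)^nt^n$, $\widetilde G(t)=\sum_{n\ge0}(xy)^nt^n$, $G(t)=\sum_{n\ge0}(yx)^nt^n$ (with $(xy)^0=(yx)^0=\mathbf 1$); $W^-(q^mt^2)$ denotes substitution of $q^mt^2$ for $t$, etc. $\bar x=1,\bar y=-1$; a word $a_1\cdots a_n$ is Catalan if $\bar a_1+\dots+\bar a_i\ge0$ ($i<n$) and $\bar a_1+\dots+\bar a_n=0$; $\mathrm{Cat}_n$ = Catalan words of length $2n$. $\Delta^{(k)}_n=\sum_{a_1\cdots a_{2n}\in\mathrm{Cat}_n}\prod_{i=1}^{2n}[\bar a_1+\dots+\bar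 a_{i-1}+k(\bar a_i+1)/2]_q\,a_1\cdots a_{2n}$, $\Delta^{(k)}(t)=\sum_n\Delta^{(k)}_nt^n$; $\widetilde\Delta^{(k)}_n$ is obtained from $\Delta^{(k)}_n$ by interchanging $x,y$ in every word, $\widetilde\Delta^{(k)}(t)=\sum_n\widetilde\Delta^{(k)}_nt^n$. Deletion: $x^{-1}w$ deletes a leading $x$ of a word $w$ (result $0$ if $w$ does not start with $x$, including $w=\mathbf 1$); $y^{-1}w$, $wx^{-1}$, $wy^{-1}$ analogously (leading $y$, trailing $x$, trailing $y$); extended linearly and coefficientwise; exponent $-k<0$ means $k$-fold application, exponent $0$ the identity, and a positive exponent $x^{k}w$ (resp. $y^kw$) means concatenation with $x^k$ (resp. $y^k$) on the left (this only occurs for $l=0$, where that summand has the factor $[0]_q=0$). *)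

theory Defs
  imports Main
begin

datatype letter = X | Y

type_synonym word = "letter list"
(* an element of V: coefficient function on words (the values used below are finitely supported) *)
type_synonym 'a vec = "word \<Rightarrow> 'a"
(* a formal power series in t with coefficients in V *)
type_synonym 'a ser = "nat \<Rightarrow> 'a vec"

definition qint :: "'a::field \<Rightarrow> int \<Rightarrow> 'a" where
  "qint q n = (q powi n - q powi (-n)) / (q - inverse q)"

definition pairing :: "letter \<Rightarrow> letter \<Rightarrow> int" where
  "pairing a b = (if a = b then 2 else -2)"

definition bar :: "letter \<Rightarrow> int" where
  "bar a = (if a = X then 1 else -1)"

definition swap :: "letter \<Rightarrow> letter" where
  "swap a = (if a = X then Y else X)"

definition single :: "word \<Rightarrow> 'a::zero_neq_one vec" where
  "single u = (\<lambda>w. if w = u then 1 else 0)"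

definition prepend :: "letter \<Rightarrow> 'a::zero vec \<Rightarrow> 'a vec" where
  "prepend a f = (\<lambda>w. case w of [] \<Rightarrow> 0 | c # w' \<Rightarrow> (if c = a then f w' else 0))"

fun qsh :: "'a::field \<Rightarrow> word \<Rightarrow> word \<Rightarrow> 'a vec" where
  "qsh q [] v = single v"
| "qsh q (a # u) [] = single (a # u)"
| "qsh q (a # u) (b # v) =
     (\<lambda>w. prepend a (qsh q u (b # v)) w
        + q powi (sum_list (map (pairing b) (a # u))) * prepend b (qsh q (a # u) v) w)"

definition vmul :: "'a::field \<Rightarrow> 'a vec \<Rightarrow> 'a vec \<Rightarrow> 'a vec" where
  "vmul q f g = (\<lambda>w. \<Sum>u\<in>{u. set u \<subseteq> {X, Y} \<and> length u \<le> length w}.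
       \<Sum>v\<in>{v. set v \<subseteq> {X, Y} \<and> length v \<le> length w}. f u * g v * qsh q u v w)"

definition smul :: "'a::field \<Rightarrow> 'a ser \<Rightarrow> 'a ser \<Rightarrow> 'a ser" where
  "smul q F G = (\<lambda>n w. \<Sum>i\<le>n. vmul q (F i) (G (n - i)) w)"

definition sadd :: "'a::field ser \<Rightarrow> 'a ser \<Rightarrow> 'a ser" where
  "sadd F G = (\<lambda>n w. F n w + G n w)"

definition sscale :: "'a::field \<Rightarrow> 'a ser \<Rightarrow> 'a ser" where
  "sscale c F = (\<lambda>n w. c * F n w)"

(* F(c t^2) *)
definition subst_sq :: "'a::field \<Rightarrow> 'a ser \<Rightarrow> 'a ser" where
  "subst_sq c F = (\<lambda>j w. if even j then c ^ (j div 2) * F (j div 2) w else 0)"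

definition shift2 :: "'a::field ser \<Rightarrow> 'a ser" where
  "shift2 F = (\<lambda>j w. if 2 \<le> j then F (j - 2) w else 0)"

(* a^k (.) for k : int: k < 0 deletes |k| leading a's, k \<ge> 0 concatenates a^k on the left;
   applied coefficientwise *)
definition lop :: "letter \<Rightarrow> int \<Rightarrow> 'a::field ser \<Rightarrow> 'a ser" where
  "lop a k F = (\<lambda>n w. if k < 0 then F n (replicate (nat (-k)) a @ w)
       else (if take (nat k) w = replicate (nat k) a \<and> nat k \<le> length w
             then F n (drop (nat k) w) else 0))"

(* (.) a^k : k < 0 deletes |k| trailing a's, k \<ge> 0 concatenates a^k on the right *)
definition rop :: "letter \<Rightarrow> int \<Rightarrow> 'a::field ser \<Rightarrow> 'a ser" where
  "rop a k F = (\<lambda>n w. if k < 0 then F n (w @ replicate (nat (-k)) a)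
       else (if drop (length w - nat k) w = replicate (nat k) a \<and> nat k \<le> length w
             then F n (take (length w - nat k) w) else 0))"

definition catalan :: "word \<Rightarrow> bool" where
  "catalan w \<longleftrightarrow> (\<forall>i. 1 \<le> i \<and> i < length w \<longrightarrow> 0 \<le> sum_list (map bar (take i w)))
     \<and> sum_list (map bar w) = 0"

definition Cat :: "nat \<Rightarrow> word set" where
  "Cat n = {w. length w = 2 * n \<and> catalan w}"

definition DeltaN :: "'a::field \<Rightarrow> int \<Rightarrow> nat \<Rightarrow> 'a vec" where
  "DeltaN q k n = (\<lambda>w. if w \<in> Cat n then
      (\<Prod>i<2 * n. qint q (sum_list (map bar (take i w)) + k * (bar (w ! i) + 1) div 2))
    else 0)"

definition DeltaS :: "'a::field \<Rightarrow> int \<Rightarrow> 'a ser" where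
  "DeltaS q k = (\<lambda>n. DeltaN q k n)"

definition DeltaTS :: "'a::field \<Rightarrow> int \<Rightarrow> 'a ser" where
  "DeltaTS q k = (\<lambda>n w. DeltaN q k n (map swap w))"

definition Wminus :: "'a::field ser" where
  "Wminus = (\<lambda>n. single (X # concat (replicate n [Y, X])))"

definition Wplus :: "'a::field ser" where
  "Wplus = (\<lambda>n. single (Y # concat (replicate n [X, Y])))"

definition Gt :: "'a::field ser" where
  "Gt = (\<lambda>n. single (concat (replicate n [X, Y])))"

definition G :: "'a::field ser" where
  "G = (\<lambda>n. single (concat (replicate n [Y, X])))"

end

theory Submission
  imports Defs
begin

definition hgt :: "word \<Rightarrow> int" where "hgt w = sum_list (map bar w)"

lemma hgt_simps[simp]: "hgt [] = 0" "hgt (c # w) = bar c + hgt w" "hgt (u @ v) = hgt u + hgt v"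
  by (auto simp: hgt_def)

lemma letter_cases2: "c = X \<or> c = Y" by (cases c) auto

lemma bar_simps[simp]: "bar X = 1" "bar Y = -1" by (auto simp: bar_def)

lemma pairing_sum: "sum_list (map (pairing b) u) = 2 * bar b * hgt u"
proof (induction u)
  case (Cons a u) then show ?case by (cases a; cases b) (simp_all add: pairing_def bar_def algebra_simps)
qed simp

lemma qsh_Nil_right[simp]: "qsh q u [] = single u"
  by (cases u) auto

lemma qsh_len: "qsh q u v w \<noteq> 0 \<Longrightarrow> length w = length u + length v"
proof (induction q u v arbitrary: w rule: qsh.induct)
  case (1 q v) then show ?case by (auto simp: single_def split: if_splits)
next
  case (2 q a u) then show ?case by (auto simp: single_def split: if_splits)
next
  case (3 q a u b v)
  show ?case
  proof (cases w)
    case Nil then show ?thesis using 3 by (auto simp: prepend_def)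
  next
    case (Cons c w')
    from 3(3) Cons have "prepend a (qsh q u (b # v)) w \<noteq> 0 \<or> prepend b (qsh q (a # u) v) w \<noteq> 0"
      by auto
    then show ?thesis
    proof
      assume "prepend a (qsh q u (b # v)) w \<noteq> 0"
      then have "qsh q u (b # v) w' \<noteq> 0" using Cons by (auto simp: prepend_def split: if_splits)
      then show ?thesis using 3(1) Cons by auto
    next
      assume "prepend b (qsh q (a # u) v) w \<noteq> 0"
      then have "qsh q (a # u) v w' \<noteq> 0" using Cons by (auto simp: prepend_def split: if_splits)
      then show ?thesis using 3(2) Cons by auto
    qed
  qed
qed

lemma qsh_Nil_w: "qsh q u v [] = (if u = [] \<and> v = [] then 1 else 0)"
  by (cases u; cases v) (auto simp: single_def prepend_def)

lemma qsh_Cons_w: "qsh q u v (c # w) =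
   (if u \<noteq> [] \<and> hd u = c then qsh q (tl u) v w else 0)
 + (if v \<noteq> [] \<and> hd v = c then q powi (2 * bar c * hgt u) * qsh q u (tl v) w else 0)"
proof (cases u)
  case Nil then show ?thesis by (cases v) (auto simp: single_def)
next
  case (Cons a u')
  then show ?thesis
  proof (cases v)
    case Nil then show ?thesis using Cons by (auto simp: single_def)
  next
    case (Cons b v')
    then show ?thesis using \<open>u = a # u'\<close>
      by (simp add: prepend_def pairing_sum del: sum_list.Cons list.map)
  qed
qed

definition WS :: "nat \<Rightarrow> word set" where "WS n = {u. set u \<subseteq> {X, Y} \<and> length u \<le> n}"

lemma WS_finite[simp]: "finite (WS n)"
  unfolding WS_def by (rule finite_lists_length_le) auto

lemma set_XY[simp]: "set (u::word) \<subseteq> {X, Y}"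
  using letter_cases2 by auto

lemma WS_alt: "WS n = {u. length u \<le> n}" by (auto simp: WS_def)

lemma vmul_WS: "vmul q f g w = (\<Sum>u\<in>WS (length w). \<Sum>v\<in>WS (length w). f u * g v * qsh q u v w)"
  by (simp add: vmul_def WS_def)

lemma WS_mono: "n \<le> N \<Longrightarrow> WS n \<subseteq> WS N" by (auto simp: WS_alt)

lemma vmul_bound:
  assumes "length w \<le> N1" "length w \<le> N2"
  shows "vmul q f g w = (\<Sum>u\<in>WS N1. \<Sum>v\<in>WS N2. f u * g v * qsh q u v w)"
proof -
  have inner: "(\<Sum>v\<in>WS (length w). f u * g v * qsh q u v w) = (\<Sum>v\<in>WS N2. f u * g v * qsh q u v w)" for u
  proof (rule sum.mono_neutral_left)
    show "WS (length w) \<subseteq> WS N2" using assms by (simp add: WS_mono)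
    show "\<forall>i\<in>WS N2 - WS (length w). f u * g i * qsh q u i w = 0"
      using qsh_len[of q u _ w] by (force simp: WS_alt)
  qed simp
  have outer: "(\<Sum>u\<in>WS (length w). \<Sum>v\<in>WS N2. f u * g v * qsh q u v w) = (\<Sum>u\<in>WS N1. \<Sum>v\<in>WS N2. f u * g v * qsh q u v w)"
  proof (rule sum.mono_neutral_left)
    show "WS (length w) \<subseteq> WS N1" using assms by (simp add: WS_mono)
    show "\<forall>i\<in>WS N1 - WS (length w). (\<Sum>v\<in>WS N2. f i * g v * qsh q i v w) = 0"
      using qsh_len[of q _ _ w] by (force simp: WS_alt intro!: sum.neutral)
  qed simp
  show ?thesis unfolding vmul_WS using inner outer by simp
qed

lemma WS_Suc_eq: "WS (Suc n) = insert [] (Cons X ` WS n \<union> Cons Y ` WS n)"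
proof -
  have "u \<in> WS (Suc n) \<longleftrightarrow> u \<in> insert [] (Cons X ` WS n \<union> Cons Y ` WS n)" for u
  proof (cases u)
    case (Cons a u') then show ?thesis using letter_cases2[of a] by (auto simp: WS_alt)
  qed (auto simp: WS_alt)
  then show ?thesis by blast
qed

lemma sum_WS_Suc: "(\<Sum>u\<in>WS (Suc n). F u) = F [] + (\<Sum>u\<in>WS n. F (X # u)) + (\<Sum>u\<in>WS n. F (Y # u))"
proof -
  have d: "Cons X ` WS n \<inter> Cons Y ` WS n = {}" by auto
  have "(\<Sum>u\<in>WS (Suc n). F u) = F [] + (\<Sum>u\<in>Cons X ` WS n \<union> Cons Y ` WS n. F u)"
    unfolding WS_Suc_eq by (subst sum.insert) auto
  also have "\<dots> = F [] + ((\<Sum>u\<in>Cons X ` WS n. F u) + (\<Sum>u\<in>Cons Y ` WS n. F u))"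
    by (subst sum.union_disjoint) (use d in auto)
  also have "\<dots> = F [] + (\<Sum>u\<in>WS n. F (X # u)) + (\<Sum>u\<in>WS n. F (Y # u))"
    by (simp add: sum.reindex add.assoc)
  finally show ?thesis by (simp add: add.assoc)
qed

lemma vmul_Nil: "vmul q f g [] = f [] * g []"
proof -
  have "WS 0 = {[]}" by (auto simp: WS_alt)
  then show ?thesis by (simp add: vmul_WS qsh_Nil_w single_def)
qed


lemma vmul_Cons: "vmul q f g (c # w) = vmul q (\<lambda>u. f (c # u)) g w
   + vmul q (\<lambda>u. q powi (2 * bar c * hgt u) * f u) (\<lambda>v. g (c # v)) w"
proof -
  let ?n = "length w"
  have "vmul q f g (c # w) = (\<Sum>u\<in>WS (Suc ?n). \<Sum>v\<in>WS (Suc ?n). f u * g v * qsh q u v (c # w))"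
    by (simp add: vmul_WS)
  also have "\<dots> = (\<Sum>u\<in>WS (Suc ?n). \<Sum>v\<in>WS (Suc ?n). f u * g v * (if u \<noteq> [] \<and> hd u = c then qsh q (tl u) v w else 0))
     + (\<Sum>u\<in>WS (Suc ?n). \<Sum>v\<in>WS (Suc ?n). f u * g v * (if v \<noteq> [] \<and> hd v = c then q powi (2 * bar c * hgt u) * qsh q u (tl v) w else 0))"
    by (simp add: qsh_Cons_w distrib_left sum.distrib)
  also have "(\<Sum>u\<in>WS (Suc ?n). \<Sum>v\<in>WS (Suc ?n). f u * g v * (if u \<noteq> [] \<and> hd u = c then qsh q (tl u) v w else 0))
      = (\<Sum>u\<in>WS ?n. \<Sum>v\<in>WS (Suc ?n). f (c # u) * g v * qsh q u v w)"
    by (subst sum_WS_Suc) (cases c; simp)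
  also have "\<dots> = vmul q (\<lambda>u. f (c # u)) g w"
    by (rule vmul_bound[symmetric]) auto
  also have "(\<Sum>u\<in>WS (Suc ?n). \<Sum>v\<in>WS (Suc ?n). f u * g v * (if v \<noteq> [] \<and> hd v = c then q powi (2 * bar c * hgt u) * qsh q u (tl v) w else 0))
      = (\<Sum>u\<in>WS (Suc ?n). \<Sum>v\<in>WS ?n. (q powi (2 * bar c * hgt u) * f u) * g (c # v) * qsh q u v w)"
    by (rule sum.cong[OF refl], subst sum_WS_Suc) (cases c; simp add: ac_simps)
  also have "\<dots> = vmul q (\<lambda>u. q powi (2 * bar c * hgt u) * f u) (\<lambda>v. g (c # v)) w"
    by (rule vmul_bound[symmetric]) auto
  finally show ?thesis .
qed

lemma vmul_scale_left: "vmul q (\<lambda>u. a * f u) g w = a * vmul q f g w"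
  by (simp add: vmul_def sum_distrib_left ac_simps)
lemma vmul_scale_right: "vmul q f (\<lambda>v. a * g v) w = a * vmul q f g w"
  by (simp add: vmul_def sum_distrib_left ac_simps)

fun pwg :: "(int \<Rightarrow> 'a::field) \<Rightarrow> (int \<Rightarrow> 'a) \<Rightarrow> int \<Rightarrow> word \<Rightarrow> 'a" where
  "pwg fx fy h [] = 1"
| "pwg fx fy h (c # w) = (if c = X then fx h else fy h) * pwg fx fy (h + bar c) w"

definition mc :: "(int \<Rightarrow> 'a::field) \<Rightarrow> (int \<Rightarrow> 'a) \<Rightarrow> int \<Rightarrow> int \<Rightarrow> word \<Rightarrow> 'a" where
  "mc fx fy s e w = (if s + hgt w = e then pwg fx fy s w else 0)"

lemma mc_Nil[simp]: "mc fx fy s e [] = (if s = e then 1 else 0)"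
  by (simp add: mc_def)

lemma mc_Cons: "mc fx fy s e (c # w) = (if c = X then fx s else fy s) * mc fx fy (s + bar c) e w"
  by (simp add: mc_def algebra_simps)

definition cx :: "word \<Rightarrow> nat" where "cx w = length (filter (\<lambda>c. c = X) w)"
definition cy :: "word \<Rightarrow> nat" where "cy w = length (filter (\<lambda>c. c = Y) w)"

lemma cx_simps[simp]: "cx [] = 0" "cx (c # w) = (if c = X then Suc (cx w) else cx w)" "cx (u @ v) = cx u + cx v"
  by (auto simp: cx_def)
lemma cy_simps[simp]: "cy [] = 0" "cy (c # w) = (if c = Y then Suc (cy w) else cy w)" "cy (u @ v) = cy u + cy v"
  by (auto simp: cy_def)

lemma hgt_cxy: "hgt w = int (cx w) - int (cy w)"
proof (induction w)
  case (Cons c w) then show ?case by (cases c) auto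
qed simp

lemma len_cxy: "length w = cx w + cy w"
proof (induction w)
  case (Cons c w) then show ?case by (cases c) auto
qed simp

lemma cx_rep[simp]: "cx (replicate l X) = l" "cy (replicate l X) = 0"
    "cx (replicate l Y) = 0" "cy (replicate l Y) = l"
  by (induction l) auto

lemma hgt_rep[simp]: "hgt (replicate l X) = int l" "hgt (replicate l Y) = - int l"
  by (simp_all add: hgt_cxy)

lemma pwg_append: "pwg fx fy h (u @ v) = pwg fx fy h u * pwg fx fy (h + hgt u) v"
  by (induction u arbitrary: h) (auto simp: algebra_simps)

lemma pwg_scale: "pwg (\<lambda>h. c * fx h) fy h w = c ^ cx w * pwg fx fy h w"
  by (induction w arbitrary: h) (auto simp: algebra_simps)

lemma pwg_repX: "pwg fx fy h (replicate l X) = (\<Prod>i<l. fx (h + int i))"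
proof (induction l arbitrary: h)
  case (Suc l)
  show ?case by (simp add: Suc prod.lessThan_Suc_shift algebra_simps del: prod.lessThan_Suc)
qed simp

lemma pwg_repY: "pwg fx fy (int b) (replicate b Y) = (\<Prod>i\<in>{1..b}. fy (int i))"
proof (induction b)
  case (Suc b)
  have "pwg fx fy (int (Suc b)) (replicate (Suc b) Y) = fy (int (Suc b)) * pwg fx fy (int b) (replicate b Y)"
    by simp
  then show ?case by (simp add: Suc prod.cl_ivl_Suc)
qed simp

lemma pwg_prod: "(\<Prod>i<length w. qint q (hh + sum_list (map bar (take i w)) + k * (bar (w ! i) + 1) div 2))
   = pwg (\<lambda>h. qint q (h + k)) (qint q) hh w"
proof (induction w arbitrary: hh)
  case (Cons c w)
  have "(\<Prod>i<length (c # w). qint q (hh + sum_list (map bar (take i (c # w))) + k * (bar ((c # w) ! i) + 1) div 2))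
     = qint q (hh + k * (bar c + 1) div 2) *
       (\<Prod>i<length w. qint q ((hh + bar c) + sum_list (map bar (take i w)) + k * (bar (w ! i) + 1) div 2))"
    by (simp add: prod.lessThan_Suc_shift algebra_simps del: prod.lessThan_Suc)
  then show ?case using Cons by (cases c) auto
qed simp

lemma pwg_zero: "fy 0 = 0 \<Longrightarrow> 0 \<le> hh \<Longrightarrow> i \<le> length w \<Longrightarrow> hh + hgt (take i w) < 0 \<Longrightarrow> pwg fx fy hh w = 0"
proof (induction w arbitrary: hh i)
  case Nil then show ?case by simp
next
  case (Cons c w)
  show ?case
  proof (cases i)
    case 0 then show ?thesis using Cons by simp
  next
    case (Suc i')
    show ?thesis
    proof (cases "c = Y \<and> hh = 0")
      case True then show ?thesis using Cons by simp
    next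
      case False
      then have "0 \<le> hh + bar c" using Cons(3) by (cases c) auto
      moreover have "(hh + bar c) + hgt (take i' w) < 0" using Cons(5) Suc by simp
      ultimately have "pwg fx fy (hh + bar c) w = 0" using Cons Suc by auto
      then show ?thesis by simp
    qed
  qed
qed

lemma hgt_take: "hgt (take i w) = sum_list (map bar (take i w))" by (simp add: hgt_def)

lemma DeltaN_pwg: "DeltaN q k N u = (if length u = 2 * N \<and> hgt u = 0 then pwg (\<lambda>h. qint q (h + k)) (qint q) 0 u else 0)"
proof (cases "u \<in> Cat N")
  case True
  then have "length u = 2 * N" "hgt u = 0" by (auto simp: Cat_def catalan_def hgt_def)
  then show ?thesis using True pwg_prod[where w=u and hh=0 and q=q and k=k] by (simp add: DeltaN_def)
next
  case False
  show ?thesis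
  proof (cases "length u = 2 * N \<and> hgt u = 0")
    case True
    with False obtain i where i: "1 \<le> i" "i < length u" "sum_list (map bar (take i u)) < 0"
      by (auto simp: Cat_def catalan_def hgt_def not_le)
    have "pwg (\<lambda>h. qint q (h + k)) (qint q) 0 u = 0"
      by (rule pwg_zero[of _ _ i]) (use i in \<open>auto simp: qint_def hgt_take\<close>)
    then show ?thesis using False by (simp add: DeltaN_def)
  next
    case False2: False
    then show ?thesis using False by (auto simp: DeltaN_def)
  qed
qed

lemma lop_neg: "lop a (- int l) F n w = F n (replicate l a @ w)"
  by (cases "l = 0") (auto simp: lop_def)

lemma rop_neg: "rop a (- int l) F n w = F n (w @ replicate l a)"
  by (cases "l = 0") (auto simp: rop_def)

definition Px :: "'a::field \<Rightarrow> int \<Rightarrow> nat \<Rightarrow> 'a" where "Px q k l = (\<Prod>i<l. qint q (int i + k))"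
definition Fr :: "'a::field \<Rightarrow> nat \<Rightarrow> 'a" where "Fr q b = (\<Prod>i\<in>{1..b}. qint q (int i))"

lemma Dser: "lop X (- int l) (rop Y (- int b) (subst_sq c (DeltaS q k))) n v =
  (if n = length v + l + b then c ^ l * Px q k l * Fr q b * mc (\<lambda>h. c * qint q (h + k)) (qint q) (int l) (int b) v else 0)"
proof -
  let ?u = "replicate l X @ v @ replicate b Y"
  let ?fx = "\<lambda>h. qint q (h + k)"
  have L: "lop X (- int l) (rop Y (- int b) (subst_sq c (DeltaS q k))) n v
     = (if even n then c ^ (n div 2) * DeltaN q k (n div 2) ?u else 0)"
    by (simp add: lop_neg rop_neg subst_sq_def DeltaS_def)
  have a1: "length ?u = l + cx v + cy v + b" using len_cxy[of v] by simp
  have a2: "hgt ?u = int l + int (cx v) - int (cy v) - int b" using hgt_cxy[of v] by simp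
  have cond: "(even n \<and> length ?u = 2 * (n div 2) \<and> hgt ?u = 0) \<longleftrightarrow> (n = length v + l + b \<and> int l + hgt v = int b)"
  proof
    assume h: "even n \<and> length ?u = 2 * (n div 2) \<and> hgt ?u = 0"
    then have "2 * (n div 2) = n" by simp
    then show "n = length v + l + b \<and> int l + hgt v = int b"
      using h unfolding a1 a2 len_cxy[of v] hgt_cxy[of v] by linarith
  next
    assume h: "n = length v + l + b \<and> int l + hgt v = int b"
    then have n2: "n = 2 * (cy v + b)" unfolding len_cxy[of v] hgt_cxy[of v] by arith
    have "even n" "n div 2 = cy v + b" using n2 by simp_all
    then show "even n \<and> length ?u = 2 * (n div 2) \<and> hgt ?u = 0"
      using h unfolding a1 a2 len_cxy[of v] hgt_cxy[of v] by arith
  qed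
  show ?thesis
  proof (cases "n = length v + l + b \<and> int l + hgt v = int b")
    case True
    then have e: "even n" "length ?u = 2 * (n div 2)" "hgt ?u = 0" using cond by blast+
    have nd: "n div 2 = l + cx v" using e(2) e(3) unfolding a1 a2 by linarith
    have hb: "0 + int l + hgt v = int b" using True by simp
    have "pwg ?fx (qint q) 0 ?u = pwg ?fx (qint q) 0 (replicate l X) * pwg ?fx (qint q) (int l) v * pwg ?fx (qint q) (int b) (replicate b Y)"
      unfolding pwg_append using hb by simp
    also have "\<dots> = Px q k l * pwg ?fx (qint q) (int l) v * Fr q b"
      unfolding pwg_repX pwg_repY Px_def Fr_def by (simp add: add.commute)
    finally have P: "pwg ?fx (qint q) 0 ?u = Px q k l * pwg ?fx (qint q) (int l) v * Fr q b" .
    have M: "mc (\<lambda>h. c * qint q (h + k)) (qint q) (int l) (int b) v = c ^ cx v * pwg ?fx (qint q) (int l) v"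
      using True by (simp add: mc_def pwg_scale)
    have "lop X (- int l) (rop Y (- int b) (subst_sq c (DeltaS q k))) n v = c ^ (l + cx v) * (Px q k l * pwg ?fx (qint q) (int l) v * Fr q b)"
      unfolding L DeltaN_pwg using e nd P by simp
    then show ?thesis using True M by (simp add: power_add)
  next
    case False
    then have "\<not> (even n \<and> length ?u = 2 * (n div 2) \<and> hgt ?u = 0)" using cond by blast
    then show ?thesis using False L by (auto simp: DeltaN_pwg mc_def)
  qed
qed

lemma smul_graded:
  assumes FF: "\<And>i u. FF i u = (if i = length u + da then f u else 0)"
    and GG: "\<And>j v. GG j v = (if j = length v + db then g v else 0)"
  shows "smul q FF GG n w = (if n = length w + da + db then vmul q f g w else 0)"
proof -
  have tm: "(\<Sum>i\<le>n. FF i u * GG (n - i) v * qsh q u v w)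
      = (if n = length w + da + db then f u * g v * qsh q u v w else 0)" for u v
  proof (cases "qsh q u v w = 0")
    case True then show ?thesis by simp
  next
    case False
    then have len: "length w = length u + length v" by (rule qsh_len)
    have "(\<Sum>i\<le>n. FF i u * GG (n - i) v * qsh q u v w)
        = (\<Sum>i\<in>{..n}. if i = length u + da then f u * (if n - (length u + da) = length v + db then g v else 0) * qsh q u v w else 0)"
      by (rule sum.cong) (auto simp: FF GG)
    also have "\<dots> = (if n = length w + da + db then f u * g v * qsh q u v w else 0)"
      using len by (auto simp: sum.delta)
    finally show ?thesis .
  qed
  have "smul q FF GG n w = (\<Sum>i\<le>n. \<Sum>u\<in>WS (length w). \<Sum>v\<in>WS (length w). FF i u * GG (n - i) v * qsh q u v w)"
    by (simp add: smul_def vmul_WS)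
  also have "\<dots> = (\<Sum>u\<in>WS (length w). \<Sum>v\<in>WS (length w). \<Sum>i\<le>n. FF i u * GG (n - i) v * qsh q u v w)"
    by (subst sum.swap) (subst (2) sum.swap, rule refl)
  also have "\<dots> = (\<Sum>u\<in>WS (length w). \<Sum>v\<in>WS (length w). if n = length w + da + db then f u * g v * qsh q u v w else 0)"
    by (simp add: tm)
  also have "\<dots> = (if n = length w + da + db then vmul q f g w else 0)"
    by (simp add: vmul_WS)
  finally show ?thesis .
qed

lemma vmul_mc_Cons: "vmul q (mc fa ga s1 e1) (mc fb gb s2 e2) (c # w) =
   (if c = X then fa s1 else ga s1) * vmul q (mc fa ga (s1 + bar c) e1) (mc fb gb s2 e2) w
 + q powi (2 * bar c * (e1 - s1)) * (if c = X then fb s2 else gb s2) * vmul q (mc fa ga s1 e1) (mc fb gb (s2 + bar c) e2) w"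
proof -
  have 1: "(\<lambda>u. mc fa ga s1 e1 (c # u)) = (\<lambda>u. (if c = X then fa s1 else ga s1) * mc fa ga (s1 + bar c) e1 u)"
    by (simp add: mc_Cons)
  have 2: "(\<lambda>u. q powi (2 * bar c * hgt u) * mc fa ga s1 e1 u) = (\<lambda>u. q powi (2 * bar c * (e1 - s1)) * mc fa ga s1 e1 u)"
  proof
    fix u
    show "q powi (2 * bar c * hgt u) * mc fa ga s1 e1 u = q powi (2 * bar c * (e1 - s1)) * mc fa ga s1 e1 u"
    proof (cases "s1 + hgt u = e1")
      case True then have "hgt u = e1 - s1" by simp
      then show ?thesis by simp
    qed (simp add: mc_def)
  qed
  have 3: "(\<lambda>v. mc fb gb s2 e2 (c # v)) = (\<lambda>v. (if c = X then fb s2 else gb s2) * mc fb gb (s2 + bar c) e2 v)"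
    by (simp add: mc_Cons)
  show ?thesis unfolding vmul_Cons 1 2 3 vmul_scale_left vmul_scale_right by (simp add: ac_simps)
qed

lemma qint_minus: "qint q (- z) = - qint q z"
  by (simp add: qint_def diff_divide_distrib)

lemma K1:
  fixes q :: "'a::field" assumes q: "q \<noteq> 0" and hq: "q - inverse q \<noteq> 0"
  shows "qint q (z + 1) = q powi z + inverse q * qint q z"
proof -
  have a: "q powi (z + 1) = q powi z * q" using q by (simp add: power_int_add)
  have b: "q powi (- (z + 1)) = inverse (q powi z) * inverse q"
    by (simp only: power_int_minus a inverse_mult_distrib)
  have c: "q powi (- z) = inverse (q powi z)" by (simp add: power_int_minus)
  have P: "q powi z \<noteq> 0" using q by simp
  show ?thesis unfolding qint_def a b c
    using P q hq by (simp add: field_simps)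
qed

lemma K2:
  fixes q :: "'a::field" assumes q: "q \<noteq> 0" and hq: "q - inverse q \<noteq> 0"
  shows "q * qint q (z + 1) = qint q z + q powi (z + 1)"
proof -
  have a: "q powi (z + 1) = q powi z * q" using q by (simp add: power_int_add)
  show ?thesis unfolding K1[OF q hq] a using q by (simp add: algebra_simps)
qed

lemma E1:
  fixes q :: "'a::field" assumes q: "q \<noteq> 0" and hq: "q - inverse q \<noteq> 0"
  shows "(-1 * qint q (h + (- int m - 1))) * (q powi (h + 1) * qint q (int m + 1 - (h + 1)))
       = q powi h * qint q (int m + 1 - h) * q powi 2 * (- inverse q * qint q (h + - int m))"
proof -
  have 1: "qint q (h + (- int m - 1)) = - qint q (int m + 1 - h)"
    using qint_minus[of q "int m + 1 - h"] by (simp add: algebra_simps)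
  have 2: "qint q (h + - int m) = - qint q (int m - h)"
    using qint_minus[of q "int m - h"] by (simp add: algebra_simps)
  have 3: "q powi (h + 1) = q powi h * q" using q by (simp add: power_int_add)
  have 4: "int m + 1 - (h + 1) = int m - h" by simp
  show ?thesis unfolding 1 2 3 4 using q by (simp add: power2_eq_square field_simps)
qed

lemma E2:
  fixes q :: "'a::field" assumes q: "q \<noteq> 0" and hq: "q - inverse q \<noteq> 0"
  shows "(-1 * qint q (h + (- int m - 1))) * qint q (h + 1)
       = q powi h * qint q (int m + 1 - h) + qint q h * (- inverse q * qint q ((h - 1) + - int m))"
proof -
  have 1: "qint q (h + (- int m - 1)) = - qint q (int m + 1 - h)"
    using qint_minus[of q "int m + 1 - h"] by (simp add: algebra_simps)
  have 2: "qint q ((h - 1) + - int m) = - qint q (int m + 1 - h)"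
    using qint_minus[of q "int m + 1 - h"] by (simp add: algebra_simps)
  show ?thesis unfolding 1 2 K1[OF q hq] by (simp add: algebra_simps)
qed

lemma E3:
  fixes q :: "'a::field" assumes q: "q \<noteq> 0" and hq: "q - inverse q \<noteq> 0"
  shows "qint q h * (q powi (h - 1) * qint q (int m + 1 - (h - 1)))
       = q powi h * qint q (int m + 1 - h) * (q powi (- 2) * qint q h) + qint q h * q ^ m"
proof -
  have k: "q * qint q ((int m + 1 - h) + 1) = qint q (int m + 1 - h) + q powi ((int m + 1 - h) + 1)"
    by (rule K2[OF q hq])
  have 1: "int m + 1 - (h - 1) = (int m + 1 - h) + 1" by simp
  have 2: "q powi (h - 1) = q powi (h - 2) * q"
  proof -
    have "q powi (h - 1) = q powi ((h - 2) + 1)" by simp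
    also have "\<dots> = q powi (h - 2) * q" using q by (rule power_int_add_1[OF disjI1])
    finally show ?thesis .
  qed
  have 3: "q powi h * q powi (- 2) = q powi (h - 2)" using q by (simp add: power_int_diff power_int_minus field_simps)
  have 4: "q powi (h - 2) * q powi ((int m + 1 - h) + 1) = q ^ m"
    using q by (simp add: power_int_add[symmetric])
  have "qint q h * (q powi (h - 1) * qint q (int m + 1 - (h - 1)))
      = qint q h * q powi (h - 2) * (q * qint q ((int m + 1 - h) + 1))" unfolding 1 2 by (simp add: ac_simps)
  also have "\<dots> = qint q h * q powi (h - 2) * qint q (int m + 1 - h) + qint q h * (q powi (h - 2) * q powi ((int m + 1 - h) + 1))"
    unfolding k by (simp add: algebra_simps)
  also have "\<dots> = qint q h * q powi (h - 2) * qint q (int m + 1 - h) + qint q h * q ^ m"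
    by (simp only: 4)
  also have "\<dots> = q powi h * qint q (int m + 1 - h) * (q powi (- 2) * qint q h) + qint q h * q ^ m"
    by (simp only: 3[symmetric] ac_simps)
  finally show ?thesis .
qed

lemma main_inter:
  fixes q :: "'a::field" and R :: int and fa ga fb fv :: "int \<Rightarrow> 'a"
  assumes q: "q \<noteq> 0" and hq: "q - inverse q \<noteq> 0"
    and fa_def: "fa = (\<lambda>h. if h = 0 then 1 else 0)" and ga_def: "ga = (\<lambda>h. if h = 1 then q ^ m else 0)"
    and fb_def: "fb = (\<lambda>h. - inverse q * qint q (h + - int m))"
    and fv_def: "fv = (\<lambda>h. -1 * qint q (h + (- int m - 1)))"
  shows "qint q R * mc fv (qint q) h R w
     = q powi h * qint q (int m + 1 - h) * vmul q (mc fa ga 0 1) (mc fb (qint q) h (R - 1)) w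
       + qint q h * vmul q (mc fa ga 1 1) (mc fb (qint q) (h - 1) (R - 1)) w"
proof (induction w arbitrary: h)
  case Nil
  show ?case by (cases "h = R") (auto simp: vmul_Nil)
next
  case (Cons c w)
  have fa0: "fa 0 = 1" "fa 1 = 0" and ga0: "ga 0 = 0" "ga 1 = q ^ m" by (simp_all add: fa_def ga_def)
  have E1': "fv h * (q powi (h + 1) * qint q (int m + 1 - (h + 1))) = q powi h * qint q (int m + 1 - h) * q powi 2 * fb h" for h
    unfolding fv_def fb_def by (rule E1[OF q hq])
  have E2': "fv h * qint q (h + 1) = q powi h * qint q (int m + 1 - h) + qint q h * fb (h - 1)" for h
    unfolding fv_def fb_def by (rule E2[OF q hq])
  have E3': "qint q h * (q powi (h - 1) * qint q (int m + 1 - (h - 1)))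
       = q powi h * qint q (int m + 1 - h) * (q powi (- 2) * qint q h) + qint q h * q ^ m" for h
    by (rule E3[OF q hq])
  show ?case
  proof (cases c)
    case X
    let ?P0 = "vmul q (mc fa ga 0 1) (mc fb (qint q) (h + 1) (R - 1)) w"
    let ?P1 = "vmul q (mc fa ga 1 1) (mc fb (qint q) h (R - 1)) w"
    let ?A = "q powi (h + 1) * qint q (int m + 1 - (h + 1))"
    let ?C = "q powi h * qint q (int m + 1 - h)"
    have V: "mc fv (qint q) h R (X # w) = fv h * mc fv (qint q) (h + 1) R w" by (simp add: mc_Cons)
    have P0: "vmul q (mc fa ga 0 1) (mc fb (qint q) h (R - 1)) (X # w) = ?P1 + q powi 2 * fb h * ?P0"
      by (simp add: vmul_mc_Cons fa0)
    have P1: "vmul q (mc fa ga 1 1) (mc fb (qint q) (h - 1) (R - 1)) (X # w) = fb (h - 1) * ?P1"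
      by (simp add: vmul_mc_Cons fa0)
    have IH: "qint q R * mc fv (qint q) (h + 1) R w = ?A * ?P0 + qint q (h + 1) * ?P1"
      using Cons.IH[of "h + 1"] by simp
    have "qint q R * mc fv (qint q) h R (X # w) = fv h * (qint q R * mc fv (qint q) (h + 1) R w)"
      unfolding V by (simp add: ac_simps)
    also have "\<dots> = (fv h * ?A) * ?P0 + (fv h * qint q (h + 1)) * ?P1"
      unfolding IH by (simp add: algebra_simps)
    also have "\<dots> = (?C * q powi 2 * fb h) * ?P0 + (?C + qint q h * fb (h - 1)) * ?P1"
      by (simp only: E1' E2')
    also have "\<dots> = ?C * (?P1 + q powi 2 * fb h * ?P0) + qint q h * (fb (h - 1) * ?P1)"
      by (simp add: algebra_simps)
    finally show ?thesis unfolding X P0 P1 .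
  next
    case Y
    let ?P0 = "vmul q (mc fa ga 0 1) (mc fb (qint q) (h - 1) (R - 1)) w"
    let ?P1 = "vmul q (mc fa ga 1 1) (mc fb (qint q) (h - 1 - 1) (R - 1)) w"
    let ?A = "q powi (h - 1) * qint q (int m + 1 - (h - 1))"
    let ?C = "q powi h * qint q (int m + 1 - h)"
    have V: "mc fv (qint q) h R (Y # w) = qint q h * mc fv (qint q) (h - 1) R w" by (simp add: mc_Cons)
    have P0: "vmul q (mc fa ga 0 1) (mc fb (qint q) h (R - 1)) (Y # w) = q powi (- 2) * qint q h * ?P0"
      by (simp add: vmul_mc_Cons ga0)
    have P1: "vmul q (mc fa ga 1 1) (mc fb (qint q) (h - 1) (R - 1)) (Y # w) = q ^ m * ?P0 + qint q (h - 1) * ?P1"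
      by (simp add: vmul_mc_Cons ga0)
    have IH: "qint q R * mc fv (qint q) (h - 1) R w = ?A * ?P0 + qint q (h - 1) * ?P1"
      using Cons.IH[of "h - 1"] by simp
    have "qint q R * mc fv (qint q) h R (Y # w) = qint q h * (qint q R * mc fv (qint q) (h - 1) R w)"
      unfolding V by (simp add: ac_simps)
    also have "\<dots> = (qint q h * ?A) * ?P0 + qint q h * qint q (h - 1) * ?P1"
      unfolding IH by (simp add: algebra_simps)
    also have "\<dots> = (?C * (q powi (- 2) * qint q h) + qint q h * q ^ m) * ?P0 + qint q h * qint q (h - 1) * ?P1"
      by (simp only: E3')
    also have "\<dots> = ?C * (q powi (- 2) * qint q h * ?P0) + qint q h * (q ^ m * ?P0 + qint q (h - 1) * ?P1)"
      by (simp add: algebra_simps)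
    finally show ?thesis unfolding Y P0 P1 .
  qed
qed

definition altG :: "nat \<Rightarrow> word" where "altG j = concat (replicate j [Y, X])"
definition altW :: "nat \<Rightarrow> word" where "altW j = X # altG j"

lemma len_concYX[simp]: "length (concat (replicate j [Y, X])) = 2 * j" by (induction j) simp_all
lemma len_altG[simp]: "length (altG j) = 2 * j" by (induction j) (simp_all add: altG_def)
lemma len_altW[simp]: "length (altW j) = Suc (2 * j)" by (simp add: altW_def)
lemma altG_Suc: "altG (Suc j) = Y # altW j" by (simp add: altG_def altW_def)

lemma altW_inj: "altW a = altW b \<longleftrightarrow> a = b"
  using len_altW by (metis Suc_inject nat_mult_eq_cancel_disj zero_neq_numeral)
lemma altG_inj: "altG a = altG b \<longleftrightarrow> a = b"
  using len_altG by (metis nat_mult_eq_cancel_disj zero_neq_numeral)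

context
  fixes q :: "'a::field" and m :: nat and fa ga :: "int \<Rightarrow> 'a"
  assumes fa_def: "fa = (\<lambda>h. if h = 0 then 1 else 0)" and ga_def: "ga = (\<lambda>h. if h = 1 then q ^ m else 0)"
begin

lemma mcA_alt: "mc fa ga 1 1 (altG j) = q ^ (m * j) \<and> mc fa ga 0 1 (altW j) = q ^ (m * j)"
proof (induction j)
  case 0 then show ?case by (simp add: altW_def altG_def mc_Cons fa_def)
next
  case (Suc j)
  have 1: "mc fa ga 1 1 (altG (Suc j)) = q ^ (m * Suc j)"
    unfolding altG_Suc mc_Cons using Suc by (simp add: ga_def power_add)
  have 2: "mc fa ga 0 1 (altW (Suc j)) = mc fa ga 1 1 (altG (Suc j))"
    unfolding altW_def[of "Suc j"] mc_Cons by (simp add: fa_def)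
  show ?case using 1 2 by simp
qed

lemma mcA_supp: "(mc fa ga 0 1 u \<noteq> 0 \<longrightarrow> (\<exists>j. u = altW j)) \<and> (mc fa ga 1 1 u \<noteq> 0 \<longrightarrow> (\<exists>j. u = altG j))"
proof (induction u)
  case Nil then show ?case by (auto simp: altG_def)
next
  case (Cons c u)
  show ?case
  proof (cases c)
    case X then show ?thesis using Cons by (auto simp: mc_Cons fa_def altW_def)
  next
    case Y
    have a: "mc fa ga 0 1 (Y # u) = 0" by (simp add: mc_Cons ga_def)
    have b: "mc fa ga 1 1 (Y # u) = q ^ m * mc fa ga 0 1 u" by (simp add: mc_Cons ga_def)
    have "mc fa ga 1 1 (Y # u) \<noteq> 0 \<Longrightarrow> \<exists>j. Y # u = altG j"
    proof -
      assume "mc fa ga 1 1 (Y # u) \<noteq> 0"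
      then have "mc fa ga 0 1 u \<noteq> 0" using b by auto
      then obtain j where "u = altW j" using Cons by blast
      then have "Y # u = altG (Suc j)" by (simp add: altG_Suc)
      then show ?thesis by blast
    qed
    then show ?thesis using a Y by auto
  qed
qed

lemma Wser: "shift2 (subst_sq (q ^ m) Wminus) i u = (if i = length u + 1 then mc fa ga 0 1 u else 0)"
proof (cases "\<exists>j. u = altW j")
  case True
  then obtain j where u: "u = altW j" by blast
  show ?thesis
  proof (cases "i = 2 * j + 2")
    case True
    then show ?thesis using u mcA_alt[of j]
      by (simp add: shift2_def subst_sq_def Wminus_def single_def altW_def altG_def power_mult)
  next
    case False
    have "\<not> (2 \<le> i \<and> even (i - 2) \<and> u = altW ((i - 2) div 2))"
      using False u altW_inj by auto
    then show ?thesis using False u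
      by (auto simp: shift2_def subst_sq_def Wminus_def single_def altW_def altG_def)
  qed
next
  case False
  then have m0: "mc fa ga 0 1 u = 0" using mcA_supp[of u] by blast
  have s0: "single (X # concat (replicate k [Y, X])) u = 0" for k
    using False by (auto simp: single_def altW_def altG_def)
  show ?thesis by (simp add: shift2_def subst_sq_def Wminus_def s0 m0)
qed

lemma Gser: "shift2 (subst_sq (q ^ m) G) i u = (if i = length u + 2 then mc fa ga 1 1 u else 0)"
proof (cases "\<exists>j. u = altG j")
  case True
  then obtain j where u: "u = altG j" by blast
  show ?thesis
  proof (cases "i = 2 * j + 2")
    case True
    then show ?thesis using u mcA_alt[of j]
      by (simp add: shift2_def subst_sq_def G_def single_def altG_def power_mult)
  next
    case False
    have "\<not> (2 \<le> i \<and> even (i - 2) \<and> u = altG ((i - 2) div 2))"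
      using False u altG_inj by auto
    then show ?thesis using False u
      by (auto simp: shift2_def subst_sq_def G_def single_def altG_def)
  qed
next
  case False
  then have m0: "mc fa ga 1 1 u = 0" using mcA_supp[of u] by blast
  have s0: "single (concat (replicate k [Y, X])) u = 0" for k
    using False by (auto simp: single_def altG_def)
  show ?thesis by (simp add: shift2_def subst_sq_def G_def s0 m0)
qed

end

lemma PX1: "qint q (int m + 1) * Px q (- int m) l = qint q (int m + 1 - int l) * Px q (- int m - 1) l"
proof (induction l)
  case 0 then show ?case by (simp add: Px_def)
next
  case (Suc l)
  have a: "qint q (int l + - int m) = - qint q (int m - int l)"
    using qint_minus[of q "int m - int l"] by simp
  have b: "qint q (int l + (- int m - 1)) = - qint q (int m + 1 - int l)"
    using qint_minus[of q "int m + 1 - int l"] by (simp add: algebra_simps)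
  have "qint q (int m + 1) * Px q (- int m) (Suc l) = (qint q (int m + 1) * Px q (- int m) l) * qint q (int l + - int m)"
    by (simp add: Px_def ac_simps)
  also have "\<dots> = qint q (int m + 1 - int l) * Px q (- int m - 1) l * (- qint q (int m - int l))"
    unfolding Suc a ..
  also have "\<dots> = qint q (int m - int l) * (Px q (- int m - 1) l * (- qint q (int m + 1 - int l)))"
    by (simp add: ac_simps)
  also have "\<dots> = qint q (int m + 1 - int (Suc l)) * Px q (- int m - 1) (Suc l)"
    unfolding b[symmetric] by (simp add: Px_def)
  finally show ?case .
qed

lemma PX2: "Px q (- int m - 1) (Suc l) = - qint q (int m + 1) * Px q (- int m) l"
proof -
  have "Px q (- int m - 1) (Suc l) = qint q (- int m - 1) * (\<Prod>i<l. qint q (int (Suc i) + (- int m - 1)))"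
    unfolding Px_def prod.lessThan_Suc_shift by simp
  also have "(\<Prod>i<l. qint q (int (Suc i) + (- int m - 1))) = Px q (- int m) l"
    unfolding Px_def by (rule prod.cong) (simp_all add: algebra_simps)
  also have "qint q (- int m - 1) = - qint q (int m + 1)"
    using qint_minus[of q "int m + 1"] by simp
  finally show ?thesis .
qed

lemma Fr_Suc: "Fr q (Suc r) = qint q (int (Suc r)) * Fr q r"
  by (simp add: Fr_def prod.cl_ivl_Suc)

lemma qint0: "qint q 0 = 0" by (simp add: qint_def)

lemma powfact: "(q::'a::field) \<noteq> 0 \<Longrightarrow> q ^ (2 * l) * (- inverse q) ^ l = (-1) ^ l * q ^ l"
proof -
  assume q: "q \<noteq> 0"
  have "(- inverse q) ^ l = ((-1) * inverse q) ^ l" by simp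
  also have "\<dots> = (-1) ^ l * inverse (q ^ l)" by (simp only: power_mult_distrib power_inverse)
  finally have "(- inverse q) ^ l = (-1) ^ l * inverse (q ^ l)" .
  moreover have "q ^ (2 * l) = q ^ l * q ^ l" by (simp add: mult_2 power_add)
  ultimately show ?thesis using q by (simp add: field_simps)
qed

lemma conj1:
  fixes q :: "'a::field" and m l r :: nat
  assumes q: "q \<noteq> 0" and hq: "q - inverse q \<noteq> 0" and r: "1 \<le> r"
  shows
   "lop X (- int l) (rop Y (- int r) (subst_sq (-1) (DeltaS q (- int m - 1))))
    = sadd
        (sscale (q ^ (2 * l) * qint q (int m + 1))
          (smul q (shift2 (subst_sq (q ^ m) Wminus))
                  (lop X (- int l) (rop Y (1 - int r) (subst_sq (- inverse q) (DeltaS q (- int m)))))))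
        (sscale (q powi (int l - 1) * qint q (int l) * qint q (int m + 1))
          (smul q (shift2 (subst_sq (q ^ m) G))
                  (lop X (1 - int l) (rop Y (1 - int r) (subst_sq (- inverse q) (DeltaS q (- int m)))))))"
proof (intro ext)
  fix n w
  define fa :: "int \<Rightarrow> 'a" where "fa = (\<lambda>h. if h = 0 then 1 else 0)"
  define ga :: "int \<Rightarrow> 'a" where "ga = (\<lambda>h. if h = 1 then q ^ m else 0)"
  define fb :: "int \<Rightarrow> 'a" where "fb = (\<lambda>h. - inverse q * qint q (h + - int m))"
  define fv :: "int \<Rightarrow> 'a" where "fv = (\<lambda>h. -1 * qint q (h + (- int m - 1)))"
  obtain r' where r': "r = Suc r'" using r by (cases r) auto
  have r1: "1 - int r = - int r'" "int r' = int r - 1" using r' by simp_all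
  define Fr' where "Fr' = Fr q r'"
  define Phi0 where "Phi0 = vmul q (mc fa ga 0 1) (mc fb (qint q) (int l) (int r - 1)) w"
  define Phi1 where "Phi1 = vmul q (mc fa ga 1 1) (mc fb (qint q) (int l - 1) (int r - 1)) w"
  define Cq where "Cq = q powi (int l) * qint q (int m + 1 - int l)"
  have main: "qint q (int r) * mc fv (qint q) (int l) (int r) w = Cq * Phi0 + qint q (int l) * Phi1"
    unfolding Cq_def Phi0_def Phi1_def
    by (rule main_inter[OF q hq fa_def ga_def fb_def fv_def])
  let ?cond = "n = length w + l + r"
  have L: "lop X (- int l) (rop Y (- int r) (subst_sq (-1) (DeltaS q (- int m - 1)))) n w
      = (if ?cond then (-1) ^ l * Px q (- int m - 1) l * Fr q r * mc fv (qint q) (int l) (int r) w else 0)"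
    unfolding fv_def by (rule Dser)
  define K1 where "K1 = (- inverse q) ^ l * Px q (- int m) l * Fr'"
  have D1: "lop X (- int l) (rop Y (1 - int r) (subst_sq (- inverse q) (DeltaS q (- int m)))) j v
      = (if j = length v + (l + r') then K1 * mc fb (qint q) (int l) (int r - 1) v else 0)" for j v
  proof -
    have "lop X (- int l) (rop Y (1 - int r) (subst_sq (- inverse q) (DeltaS q (- int m)))) j v
        = lop X (- int l) (rop Y (- int r') (subst_sq (- inverse q) (DeltaS q (- int m)))) j v"
      by (simp only: r1(1))
    also have "\<dots> = (if j = length v + l + r' then (- inverse q) ^ l * Px q (- int m) l * Fr q r' *
        mc (\<lambda>h. - inverse q * qint q (h + - int m)) (qint q) (int l) (int r') v else 0)"
      by (rule Dser)
    finally show ?thesis unfolding K1_def Fr'_def fb_def r1(2) by (simp add: ac_simps)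
  qed
  have T1: "smul q (shift2 (subst_sq (q ^ m) Wminus))
                  (lop X (- int l) (rop Y (1 - int r) (subst_sq (- inverse q) (DeltaS q (- int m))))) n w
      = (if ?cond then K1 * Phi0 else 0)"
  proof -
    have "smul q (shift2 (subst_sq (q ^ m) Wminus))
                  (lop X (- int l) (rop Y (1 - int r) (subst_sq (- inverse q) (DeltaS q (- int m))))) n w
        = (if n = length w + 1 + (l + r') then vmul q (mc fa ga 0 1) (\<lambda>v. K1 * mc fb (qint q) (int l) (int r - 1) v) w else 0)"
      by (rule smul_graded[OF Wser[OF fa_def ga_def] D1])
    then show ?thesis using r' by (simp add: vmul_scale_right Phi0_def)
  qed
  have C1: "q ^ (2 * l) * qint q (int m + 1) * K1 = (-1) ^ l * Px q (- int m - 1) l * Fr' * Cq"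
  proof -
    have "q ^ (2 * l) * qint q (int m + 1) * K1 = (q ^ (2 * l) * (- inverse q) ^ l) * (qint q (int m + 1) * Px q (- int m) l) * Fr'"
      unfolding K1_def by (simp add: ac_simps)
    also have "\<dots> = ((-1) ^ l * q ^ l) * (qint q (int m + 1 - int l) * Px q (- int m - 1) l) * Fr'"
      unfolding powfact[OF q] PX1 ..
    also have "\<dots> = (-1) ^ l * Px q (- int m - 1) l * Fr' * Cq"
      unfolding Cq_def by (simp add: power_int_of_nat ac_simps)
    finally show ?thesis .
  qed
  have LHS': "(-1) ^ l * Px q (- int m - 1) l * Fr q r * mc fv (qint q) (int l) (int r) w
      = (-1) ^ l * Px q (- int m - 1) l * Fr' * (Cq * Phi0 + qint q (int l) * Phi1)"
    unfolding main[symmetric] Fr'_def r' Fr_Suc by (simp add: ac_simps)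
  show "lop X (- int l) (rop Y (- int r) (subst_sq (-1) (DeltaS q (- int m - 1)))) n w =
    sadd (sscale (q ^ (2 * l) * qint q (int m + 1))
          (smul q (shift2 (subst_sq (q ^ m) Wminus))
            (lop X (- int l) (rop Y (1 - int r) (subst_sq (- inverse q) (DeltaS q (- int m)))))))
     (sscale (q powi (int l - 1) * qint q (int l) * qint q (int m + 1))
       (smul q (shift2 (subst_sq (q ^ m) G))
         (lop X (1 - int l) (rop Y (1 - int r) (subst_sq (- inverse q) (DeltaS q (- int m))))))) n w"
  proof (cases l)
    case 0
    have "Phi1 * 0 = 0" by simp
    show ?thesis unfolding sadd_def sscale_def L T1 LHS' using 0 C1
      by (simp add: qint0 algebra_simps)
  next
    case (Suc l')
    have l1: "1 - int l = - int l'" "int l' = int l - 1" using Suc by simp_all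
    define K2 where "K2 = (- inverse q) ^ l' * Px q (- int m) l' * Fr'"
    have D2: "lop X (1 - int l) (rop Y (1 - int r) (subst_sq (- inverse q) (DeltaS q (- int m)))) j v
        = (if j = length v + (l' + r') then K2 * mc fb (qint q) (int l - 1) (int r - 1) v else 0)" for j v
    proof -
      have "lop X (1 - int l) (rop Y (1 - int r) (subst_sq (- inverse q) (DeltaS q (- int m)))) j v
          = lop X (- int l') (rop Y (- int r') (subst_sq (- inverse q) (DeltaS q (- int m)))) j v"
        by (simp only: r1(1) l1(1))
      also have "\<dots> = (if j = length v + l' + r' then (- inverse q) ^ l' * Px q (- int m) l' * Fr q r' *
          mc (\<lambda>h. - inverse q * qint q (h + - int m)) (qint q) (int l') (int r') v else 0)"
        by (rule Dser)
      finally show ?thesis unfolding K2_def Fr'_def fb_def r1(2) l1(2) by (simp add: ac_simps)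
    qed
    have T2: "smul q (shift2 (subst_sq (q ^ m) G))
                  (lop X (1 - int l) (rop Y (1 - int r) (subst_sq (- inverse q) (DeltaS q (- int m))))) n w
      = (if ?cond then K2 * Phi1 else 0)"
    proof -
      have "smul q (shift2 (subst_sq (q ^ m) G))
                  (lop X (1 - int l) (rop Y (1 - int r) (subst_sq (- inverse q) (DeltaS q (- int m))))) n w
          = (if n = length w + 2 + (l' + r') then vmul q (mc fa ga 1 1) (\<lambda>v. K2 * mc fb (qint q) (int l - 1) (int r - 1) v) w else 0)"
        by (rule smul_graded[OF Gser[OF fa_def ga_def] D2])
      then show ?thesis using r' Suc by (simp add: vmul_scale_right Phi1_def)
    qed
    have C2: "q powi (int l - 1) * qint q (int l) * qint q (int m + 1) * K2 = (-1) ^ l * Px q (- int m - 1) l * Fr' * qint q (int l)"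
    proof -
      have il: "int l - 1 = int l'" using Suc by simp
      have pw: "q powi (int l - 1) = q ^ l'" unfolding il by simp
      have "(- inverse q) ^ l' = ((-1) * inverse q) ^ l'" by simp
      also have "\<dots> = (-1) ^ l' * inverse (q ^ l')" by (simp only: power_mult_distrib power_inverse)
      finally have pf: "q ^ l' * (- inverse q) ^ l' = (-1) ^ l'" using q by simp
      have "q powi (int l - 1) * qint q (int l) * qint q (int m + 1) * K2
          = (q ^ l' * (- inverse q) ^ l') * qint q (int l) * (qint q (int m + 1) * Px q (- int m) l') * Fr'"
        unfolding K2_def pw by (simp add: ac_simps)
      also have "\<dots> = (-1) ^ l * Px q (- int m - 1) l * Fr' * qint q (int l)"
        unfolding pf Suc PX2 by simp
      finally show ?thesis .
    qed
    show ?thesis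
    proof (cases ?cond)
      case True
      have R: "sadd (sscale (q ^ (2 * l) * qint q (int m + 1))
          (smul q (shift2 (subst_sq (q ^ m) Wminus))
            (lop X (- int l) (rop Y (1 - int r) (subst_sq (- inverse q) (DeltaS q (- int m)))))))
         (sscale (q powi (int l - 1) * qint q (int l) * qint q (int m + 1))
           (smul q (shift2 (subst_sq (q ^ m) G))
             (lop X (1 - int l) (rop Y (1 - int r) (subst_sq (- inverse q) (DeltaS q (- int m))))))) n w
        = (q ^ (2 * l) * qint q (int m + 1) * K1) * Phi0 + (q powi (int l - 1) * qint q (int l) * qint q (int m + 1) * K2) * Phi1"
        unfolding sadd_def sscale_def T1 T2 using True by (simp add: mult.assoc)
      show ?thesis unfolding R C1 C2 L LHS' using True by (simp add: algebra_simps)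
    next
      case False
      then show ?thesis unfolding sadd_def sscale_def L T1 T2 by simp
    qed
  qed
qed

definition sw :: "'a ser \<Rightarrow> 'a ser" where "sw F = (\<lambda>n w. F n (map swap w))"

lemma swap_swap[simp]: "swap (swap a) = a" by (cases a) (auto simp: swap_def)
lemma swap_XY[simp]: "swap X = Y" "swap Y = X" by (auto simp: swap_def)
lemma swap_comp[simp]: "swap \<circ> swap = id" by (auto simp: fun_eq_iff)
lemma swap_inj[simp]: "swap a = swap b \<longleftrightarrow> a = b" by (metis swap_swap)
lemma map_swap_swap[simp]: "map swap (map swap w) = w" by (induction w) auto
lemma bar_swap: "bar (swap a) = - bar a" by (cases a) (auto simp: bar_def swap_def)
lemma pairing_swap: "pairing (swap a) (swap b) = pairing a b"
  by (cases a; cases b) (auto simp: pairing_def swap_def)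

lemma map_swap_eq: "map swap x = y \<longleftrightarrow> x = map swap y" by auto

lemma single_swap: "single u (map swap w) = single (map swap u) w"
  by (auto simp: single_def)

lemma prepend_swap: "prepend (swap a) F (map swap w) = prepend a (\<lambda>w'. F (map swap w')) w"
  by (cases w) (auto simp: prepend_def)

lemma qsh_swap: "qsh q (map swap u) (map swap v) (map swap w) = qsh q u v w"
proof (induction q u v arbitrary: w rule: qsh.induct)
  case (1 q v) then show ?case by (simp add: single_swap)
next
  case (2 q a u)
  have "qsh q (map swap (a # u)) (map swap []) (map swap w) = single (map swap (a # u)) (map swap w)"
    by (simp only: list.map(1) qsh_Nil_right)
  then show ?case by (simp only: single_swap map_swap_swap qsh_Nil_right)
next
  case (3 q a u b v)
  have e: "sum_list (map (pairing (swap b)) (swap a # map swap u)) = sum_list (map (pairing b) (a # u))"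
    by (simp add: pairing_swap comp_def)
  have "qsh q (map swap (a # u)) (map swap (b # v)) (map swap w)
     = prepend (swap a) (qsh q (map swap u) (map swap (b # v))) (map swap w)
       + q powi (sum_list (map (pairing (swap b)) (swap a # map swap u))) * prepend (swap b) (qsh q (map swap (a # u)) (map swap v)) (map swap w)"
    by simp
  also have "\<dots> = prepend a (qsh q u (b # v)) w + q powi (sum_list (map (pairing b) (a # u))) * prepend b (qsh q (a # u) v) w"
    unfolding e prepend_swap 3(1) 3(2) ..
  finally show ?case by simp
qed

lemma sum_WS_swap: "(\<Sum>u\<in>WS n. F (map swap u)) = (\<Sum>u\<in>WS n. F u)"
  by (rule sum.reindex_bij_witness[of _ "map swap" "map swap"]) (auto simp: WS_alt)

lemma vmul_swap: "vmul q (\<lambda>u. f (map swap u)) (\<lambda>v. g (map swap v)) w = vmul q f g (map swap w)"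
proof -
  have "vmul q f g (map swap w) = (\<Sum>u\<in>WS (length w). \<Sum>v\<in>WS (length w). f u * g v * qsh q u v (map swap w))"
    by (simp add: vmul_WS)
  also have "\<dots> = (\<Sum>u\<in>WS (length w). \<Sum>v\<in>WS (length w). f (map swap u) * g (map swap v) * qsh q (map swap u) (map swap v) (map swap w))"
    by (simp only: sum_WS_swap[where F = "\<lambda>u. \<Sum>v\<in>WS (length w). f u * g v * qsh q u v (map swap w)"]
       sum_WS_swap[where F = "\<lambda>v. f _ * g v * qsh q _ v (map swap w)"])
  also have "\<dots> = vmul q (\<lambda>u. f (map swap u)) (\<lambda>v. g (map swap v)) w"
    by (simp add: vmul_WS qsh_swap)
  finally show ?thesis by simp
qed

lemma smul_sw: "smul q (sw F) (sw FF) = sw (smul q F FF)"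
  by (auto simp: smul_def sw_def vmul_swap intro!: ext)
lemma sadd_sw: "sadd (sw F) (sw FF) = sw (sadd F FF)" by (simp add: sadd_def sw_def)
lemma sscale_sw: "sscale c (sw F) = sw (sscale c F)" by (simp add: sscale_def sw_def)
lemma shift2_sw: "shift2 (sw F) = sw (shift2 F)" by (simp add: shift2_def sw_def)
lemma subst_sq_sw: "subst_sq c (sw F) = sw (subst_sq c F)" by (simp add: subst_sq_def sw_def)

lemma rep_swap: "map swap x = replicate n a \<longleftrightarrow> x = replicate n (swap a)"
  by (auto simp: map_swap_eq)

lemma lop_sw: "lop (swap a) k (sw F) = sw (lop a k F)"
  by (auto simp: lop_def sw_def take_map drop_map rep_swap intro!: ext)
lemma rop_sw: "rop (swap a) k (sw F) = sw (rop a k F)"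
  by (auto simp: rop_def sw_def take_map drop_map rep_swap intro!: ext)

lemma DeltaTS_sw: "DeltaTS q k = sw (DeltaS q k)" by (simp add: DeltaTS_def DeltaS_def sw_def)
lemma Wplus_sw: "Wplus = sw Wminus"
  by (auto simp: Wplus_def Wminus_def sw_def single_swap map_concat intro!: ext)
lemma Gt_sw: "Gt = sw G"
  by (auto simp: Gt_def G_def sw_def single_swap map_concat intro!: ext)

lemma lop_sw': "lop Y k (sw F) = sw (lop X k F)" using lop_sw[of X] by simp
lemma rop_sw': "rop X k (sw F) = sw (rop Y k F)" using rop_sw[of Y] by simp

theorem lemma6p7:
  fixes q :: "'a::field_char_0" and m l r :: nat
  assumes "q \<noteq> 0" and "\<forall>n::nat. 0 < n \<longrightarrow> q ^ n \<noteq> 1"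
    and "l \<le> m" and "1 \<le> r" and "r \<le> m"
  shows
   "lop X (- int l) (rop Y (- int r) (subst_sq (-1) (DeltaS q (- int m - 1))))
    = sadd
        (sscale (q ^ (2 * l) * qint q (int m + 1))
          (smul q (shift2 (subst_sq (q ^ m) Wminus))
                  (lop X (- int l) (rop Y (1 - int r) (subst_sq (- inverse q) (DeltaS q (- int m)))))))
        (sscale (q powi (int l - 1) * qint q (int l) * qint q (int m + 1))
          (smul q (shift2 (subst_sq (q ^ m) G))
                  (lop X (1 - int l) (rop Y (1 - int r) (subst_sq (- inverse q) (DeltaS q (- int m)))))))
  \<and> lop Y (- int l) (rop X (- int r) (subst_sq (-1) (DeltaTS q (- int m - 1))))
    = sadd
        (sscale (q ^ (2 * l) * qint q (int m + 1))
          (smul q (shift2 (subst_sq (q ^ m) Wplus))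
                  (lop Y (- int l) (rop X (1 - int r) (subst_sq (- inverse q) (DeltaTS q (- int m)))))))
        (sscale (q powi (int l - 1) * qint q (int l) * qint q (int m + 1))
          (smul q (shift2 (subst_sq (q ^ m) Gt))
                  (lop Y (1 - int l) (rop X (1 - int r) (subst_sq (- inverse q) (DeltaTS q (- int m)))))))"
proof -
  have q: "q \<noteq> 0" by (rule assms(1))
  have hq: "q - inverse q \<noteq> 0"
  proof
    assume "q - inverse q = 0"
    then have "q * q = 1" using q by (simp add: field_simps)
    then have "q ^ 2 = 1" by (simp add: power2_eq_square)
    then show False using assms(2) by (metis zero_less_numeral)
  qed
  note c1 = conj1[OF q hq assms(4), where m=m and l=l]
  show ?thesis
    unfolding DeltaTS_sw Wplus_sw Gt_sw subst_sq_sw rop_sw' lop_sw' shift2_sw smul_sw sscale_sw sadd_sw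
    using c1 by simp
qed


end
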